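(* Let $a,b,c,d\ge0$ be integers and $\mathcal Z=R_{a+b,c}\cup R_{a,c+d}$. Then $\gamma_{\rm thin}(\mathcal Z)\ge bc+ad-b-d$.
   Context: $\mathbb Z_+=\{0,1,2,\dots\}$, $R_{a,b}=([0,a-1]\times[0,b-1])\cap\mathbb Z_+^2$ (empty if $a=0$ or $b=0$); a zero-set is a union of such rectangles. $\mathrm{row}(x,A),\mathrm{col}(x,A)$ count points of $A$ on the horizontal/vertical line through $x$; $\mathcal T(A)=A\cup\{x\notin A:(\mathrm{row}(x,A),\mathrm{col}(x,A))\notin\mathcal Z\}$; $A$ spans if $\bigcup_t\mathcal T^t(A)=\mathbb Z_+^2$. A set is thin if each of its points has no other point of the set on its horizontal line or no other point of the set on its vertical line; $\gamma_{\rm thin}(\mathcal Z)$ is the minimal size of a thin finite spanning set. *)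

theory Defs
  imports Main "HOL-Library.Extended_Nat"
begin

type_synonym point = "nat \<times> nat"

definition Rect :: "nat \<Rightarrow> nat \<Rightarrow> point set" where
  "Rect a b = {(i, j). i < a \<and> j < b}"

definition ecount :: "point set \<Rightarrow> enat" where
  "ecount S = (if finite S then enat (card S) else \<infinity>)"

definition row :: "point \<Rightarrow> point set \<Rightarrow> enat" where
  "row x A = ecount {y \<in> A. snd y = snd x}"

definition col :: "point \<Rightarrow> point set \<Rightarrow> enat" where
  "col x A = ecount {y \<in> A. fst y = fst x}"

definition in_zero :: "point set \<Rightarrow> enat \<Rightarrow> enat \<Rightarrow> bool" where
  "in_zero Z r c = (\<exists>i j. (i, j) \<in> Z \<and> r = enat i \<and> c = enat j)"

definition T :: "point set \<Rightarrow> point set \<Rightarrow> point set" where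
  "T Z A = A \<union> {x. x \<notin> A \<and> \<not> in_zero Z (row x A) (col x A)}"

definition spans :: "point set \<Rightarrow> point set \<Rightarrow> bool" where
  "spans Z A = ((\<Union>t. (T Z ^^ t) A) = UNIV)"

definition thin :: "point set \<Rightarrow> bool" where
  "thin A = (\<forall>x\<in>A. (\<forall>y\<in>A. snd y = snd x \<longrightarrow> y = x) \<or> (\<forall>y\<in>A. fst y = fst x \<longrightarrow> y = x))"

definition gamma_thin :: "point set \<Rightarrow> enat" where
  "gamma_thin Z = (INF A \<in> {A. finite A \<and> thin A \<and> spans Z A}. enat (card A))"

end

theory Submission
  imports Defs
begin

definition Zn :: "nat\<Rightarrow>nat\<Rightarrow>nat\<Rightarrow>nat\<Rightarrow>nat\<Rightarrow>nat\<Rightarrow>bool" where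
  "Zn a b c d r s = ((r < a+b \<and> s < c) \<or> (r < a \<and> s < c+d))"

definition rcnt :: "point set \<Rightarrow> nat \<Rightarrow> nat" where "rcnt S j = card {y\<in>S. snd y = j}"
definition ccnt :: "point set \<Rightarrow> nat \<Rightarrow> nat" where "ccnt S i = card {y\<in>S. fst y = i}"

lemma rcnt_mono: "finite S' \<Longrightarrow> S \<subseteq> S' \<Longrightarrow> rcnt S j \<le> rcnt S' j"
  unfolding rcnt_def by (rule card_mono) auto
lemma ccnt_mono: "finite S' \<Longrightarrow> S \<subseteq> S' \<Longrightarrow> ccnt S j \<le> ccnt S' j"
  unfolding ccnt_def by (rule card_mono) auto

lemma thin_alone: assumes "thin A" "x \<in> A" "finite A"
  shows "card {y\<in>A. snd y = snd x} \<le> 1 \<or> card {y\<in>A. fst y = fst x} \<le> 1"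
proof -
  from assms(1,2) have "(\<forall>y\<in>A. snd y = snd x \<longrightarrow> y = x) \<or> (\<forall>y\<in>A. fst y = fst x \<longrightarrow> y = x)"
    unfolding thin_def by blast
  then show ?thesis
  proof
    assume h: "\<forall>y\<in>A. snd y = snd x \<longrightarrow> y = x"
    have "{y\<in>A. snd y = snd x} \<subseteq> {x}" using h by auto
    then have "card {y\<in>A. snd y = snd x} \<le> card {x}" by (intro card_mono) auto
    then show ?thesis by simp
  next
    assume h: "\<forall>y\<in>A. fst y = fst x \<longrightarrow> y = x"
    have "{y\<in>A. fst y = fst x} \<subseteq> {x}" using h by auto
    then have "card {y\<in>A. fst y = fst x} \<le> card {x}" by (intro card_mono) auto
    then show ?thesis by simp
  qed
qed

lemma least_props:
  assumes "P (N::nat)"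
  shows "(LEAST k. P k) \<le> N" "P (LEAST k. P k)" "\<And>m. m < (LEAST k. P k) \<Longrightarrow> \<not> P m"
proof -
  show "(LEAST k. P k) \<le> N" using assms by (rule Least_le)
  show "P (LEAST k. P k)" using assms by (rule LeastI)
  show "\<And>m. m < (LEAST k. P k) \<Longrightarrow> \<not> P m" by (rule not_less_Least)
qed

lemma subset_card_between:
  assumes "finite B" "L \<subseteq> B" "card L \<le> m" "m \<le> card B"
  shows "\<exists>X. L \<subseteq> X \<and> X \<subseteq> B \<and> card X = m"
proof -
  have fL: "finite L" using assms finite_subset by blast
  have "card (B - L) = card B - card L" using assms fL by (simp add: card_Diff_subset)
  then have h: "m - card L \<le> card (B - L)" using assms by simp
  obtain Y where Y: "Y \<subseteq> B - L" "card Y = m - card L" and fY: "finite Y"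
    by (rule obtain_subset_with_card_n[OF h])
  have "card (L \<union> Y) = card L + card Y" using Y(1) fL fY by (subst card_Un_disjoint) auto
  then show ?thesis using Y assms by (intro exI[of _ "L \<union> Y"]) auto
qed

lemma chain_choice:
  fixes F :: "nat \<Rightarrow> 'a set"
  assumes mono: "\<And>t t'. t \<le> t' \<Longrightarrow> F t \<subseteq> F t'" and fin: "\<And>t. finite (F t)"
    and big: "m \<le> card (F N)"
  shows "\<exists>X. card X = m \<and> X \<subseteq> F N \<and> (\<forall>t. (card (F t) < m \<and> F t \<subseteq> X) \<or> (m \<le> card (F t) \<and> X \<subseteq> F t))"
proof (cases "m = 0")
  case True
  then show ?thesis by (intro exI[of _ "{}"]) auto
next
  case False
  define tau where "tau = (LEAST k. m \<le> card (F k))"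
  note lp = least_props[of "\<lambda>k. m \<le> card (F k)" N, OF big, folded tau_def]
  define L where "L = (if tau = 0 then {} else F (tau - 1))"
  have cL: "card L < m" using False lp(3)[of "tau - 1"] unfolding L_def by (cases "tau = 0") auto
  have LF: "L \<subseteq> F tau" unfolding L_def using mono[of "tau - 1" tau] by auto
  obtain X where X: "L \<subseteq> X" "X \<subseteq> F tau" "card X = m"
    using subset_card_between[OF fin LF _ lp(2)] cL by fastforce
  have "\<forall>t. (card (F t) < m \<and> F t \<subseteq> X) \<or> (m \<le> card (F t) \<and> X \<subseteq> F t)"
  proof
    fix t
    show "(card (F t) < m \<and> F t \<subseteq> X) \<or> (m \<le> card (F t) \<and> X \<subseteq> F t)"
    proof (cases "t < tau")
      case True
      then have "F t \<subseteq> L" unfolding L_def using mono[of t "tau - 1"] by auto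
      then show ?thesis using lp(3)[OF True] X(1) by auto
    next
      case False
      then have "F tau \<subseteq> F t" using mono by auto
      moreover have "card (F tau) \<le> card (F t)" using calculation fin by (intro card_mono) auto
      ultimately show ?thesis using lp(2) X(2) by auto
    qed
  qed
  then show ?thesis using X mono[OF lp(1)] by blast
qed


locale LS =
  fixes a b c d :: nat and A :: "point set" and p :: "nat \<Rightarrow> point" and n :: nat
  assumes finA: "finite A" and thinA: "thin A"
    and fresh: "\<And>k. k < n \<Longrightarrow> p k \<notin> A \<union> p ` {..<k}"
    and legal: "\<And>k. k < n \<Longrightarrow> \<not> Zn a b c d (rcnt (A \<union> p ` {..<k}) (snd (p k))) (ccnt (A \<union> p ` {..<k}) (fst (p k)))"
    and a1: "1 \<le> a" and c1: "1 \<le> c" and ab2: "2 \<le> a+b" and cd2: "2 \<le> c+d"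
    and boxC: "\<And>i. i < a \<Longrightarrow> c+d \<le> ccnt (A \<union> p ` {..<n}) i"
    and boxR: "\<And>j. j < c \<Longrightarrow> a+b \<le> rcnt (A \<union> p ` {..<n}) j"
begin

definition S where "S k = A \<union> p ` {..<k}"
abbreviation rc where "rc k j \<equiv> rcnt (S k) j"
abbreviation cc where "cc k i \<equiv> ccnt (S k) i"
definition Csup where "Csup k = {i. c+d \<le> cc k i}"
definition Rsup where "Rsup k = {j. a+b \<le> rc k j}"

lemma finS: "finite (S k)" unfolding S_def using finA by auto
lemma S_mono: "k \<le> k' \<Longrightarrow> S k \<subseteq> S k'" unfolding S_def by auto
lemma S0: "S 0 = A" unfolding S_def by auto
lemma rc_mono: "k \<le> k' \<Longrightarrow> rc k j \<le> rc k' j" using rcnt_mono[OF finS S_mono] .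
lemma cc_mono: "k \<le> k' \<Longrightarrow> cc k j \<le> cc k' j" using ccnt_mono[OF finS S_mono] .
lemma S_Suc: "S (Suc k) = insert (p k) (S k)" unfolding S_def by (auto simp: lessThan_Suc)
lemma S_cases: "y \<in> S k \<Longrightarrow> y \<notin> A \<Longrightarrow> \<exists>m<k. y = p m" unfolding S_def by auto
lemma legalS: "m < n \<Longrightarrow> \<not> Zn a b c d (rc m (snd (p m))) (cc m (fst (p m)))"
  using legal unfolding S_def by blast

lemma rc_step: assumes "rc k j < rc (Suc k) j" shows "snd (p k) = j"
proof (rule ccontr)
  assume "snd (p k) \<noteq> j"
  then have "{y\<in>S (Suc k). snd y = j} = {y\<in>S k. snd y = j}" unfolding S_Suc by auto
  then show False using assms unfolding rcnt_def by simp
qed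
lemma cc_step: assumes "cc k j < cc (Suc k) j" shows "fst (p k) = j"
proof (rule ccontr)
  assume "fst (p k) \<noteq> j"
  then have "{y\<in>S (Suc k). fst y = j} = {y\<in>S k. fst y = j}" unfolding S_Suc by auto
  then show False using assms unfolding ccnt_def by simp
qed

lemma finCsup: "finite (Csup k)"
proof -
  have "Csup k \<subseteq> fst ` S k"
  proof
    fix i assume "i \<in> Csup k"
    then have "1 \<le> cc k i" using cd2 unfolding Csup_def by auto
    then have "{y\<in>S k. fst y = i} \<noteq> {}" unfolding ccnt_def by (metis card.empty not_one_le_zero)
    then obtain y where "y \<in> S k" "fst y = i" by blast
    then show "i \<in> fst ` S k" by (metis image_eqI)
  qed
  then show ?thesis using finS finite_subset by blast
qed
lemma finRsup: "finite (Rsup k)"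
proof -
  have "Rsup k \<subseteq> snd ` S k"
  proof
    fix i assume "i \<in> Rsup k"
    then have "1 \<le> rc k i" using ab2 unfolding Rsup_def by auto
    then have "{y\<in>S k. snd y = i} \<noteq> {}" unfolding rcnt_def by (metis card.empty not_one_le_zero)
    then obtain y where "y \<in> S k" "snd y = i" by blast
    then show "i \<in> snd ` S k" by (metis image_eqI)
  qed
  then show ?thesis using finS finite_subset by blast
qed
lemma Csup_mono: assumes "k \<le> k'" shows "Csup k \<subseteq> Csup k'"
proof
  fix i assume "i \<in> Csup k" then show "i \<in> Csup k'" using cc_mono[OF assms, of i] unfolding Csup_def by auto
qed
lemma Rsup_mono: assumes "k \<le> k'" shows "Rsup k \<subseteq> Rsup k'"
proof
  fix i assume "i \<in> Rsup k" then show "i \<in> Rsup k'" using rc_mono[OF assms, of i] unfolding Rsup_def by auto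
qed

lemma nonA_colsup:
  assumes "y \<in> S t" "t \<le> n" "y \<notin> A" "\<And>m. m < t \<Longrightarrow> cc m (fst y) < c+d"
  shows "a \<le> rc t (snd y)"
proof -
  obtain m where m: "m < t" "y = p m" using S_cases assms by blast
  have "\<not> Zn a b c d (rc m (snd y)) (cc m (fst y))" using legalS[of m] m assms(2) by auto
  then have "a \<le> rc m (snd y)" using assms(4)[OF m(1)] unfolding Zn_def by auto
  then show ?thesis using rc_mono[of m t "snd y"] m(1) by linarith
qed
lemma nonA_rowsup:
  assumes "y \<in> S t" "t \<le> n" "y \<notin> A" "\<And>m. m < t \<Longrightarrow> rc m (snd y) < a+b"
  shows "c \<le> cc t (fst y)"
proof -
  obtain m where m: "m < t" "y = p m" using S_cases assms by blast
  have "\<not> Zn a b c d (rc m (snd y)) (cc m (fst y))" using legalS[of m] m assms(2) by auto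
  then have "c \<le> cc m (fst y)" using assms(4)[OF m(1)] unfolding Zn_def by auto
  then show ?thesis using cc_mono[of m t "fst y"] m(1) by linarith
qed
lemma nonA_rowact:
  assumes "y \<in> S t" "t \<le> n" "y \<notin> A" "\<And>m. m < t \<Longrightarrow> rc m (snd y) < a"
  shows "c+d \<le> cc t (fst y)"
proof -
  obtain m where m: "m < t" "y = p m" using S_cases assms by blast
  have "\<not> Zn a b c d (rc m (snd y)) (cc m (fst y))" using legalS[of m] m assms(2) by auto
  then have "c+d \<le> cc m (fst y)" using assms(4)[OF m(1)] unfolding Zn_def by auto
  then show ?thesis using cc_mono[of m t "fst y"] m(1) by linarith
qed
lemma nonA_colact:
  assumes "y \<in> S t" "t \<le> n" "y \<notin> A" "\<And>m. m < t \<Longrightarrow> cc m (fst y) < c"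
  shows "a+b \<le> rc t (snd y)"
proof -
  obtain m where m: "m < t" "y = p m" using S_cases assms by blast
  have "\<not> Zn a b c d (rc m (snd y)) (cc m (fst y))" using legalS[of m] m assms(2) by auto
  then have "a+b \<le> rc m (snd y)" using assms(4)[OF m(1)] unfolding Zn_def by auto
  then show ?thesis using rc_mono[of m t "snd y"] m(1) by linarith
qed

lemma simul:
  assumes "0 < t" "t \<le> n" "rc (t-1) j < rc t j" "cc (t-1) i < cc t i"
    "Zn a b c d (rc (t-1) j) (cc (t-1) i)"
  shows False
proof -
  have t: "Suc (t-1) = t" using assms(1) by simp
  have "snd (p (t-1)) = j" using rc_step[of "t-1" j] assms(3) t by simp
  moreover have "fst (p (t-1)) = i" using cc_step[of "t-1" i] assms(4) t by simp
  ultimately show False using legalS[of "t-1"] assms by auto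
qed

end

locale LS2 = LS +
  fixes SC SR :: "nat set"
  assumes SCcard: "card SC = a - 1" and SCsub: "SC \<subseteq> Csup n"
    and SCchain: "\<And>t. (card (Csup t) < a - 1 \<and> Csup t \<subseteq> SC) \<or> (a - 1 \<le> card (Csup t) \<and> SC \<subseteq> Csup t)"
    and SRcard: "card SR = c - 1" and SRsub: "SR \<subseteq> Rsup n"
    and SRchain: "\<And>t. (card (Rsup t) < c - 1 \<and> Rsup t \<subseteq> SR) \<or> (c - 1 \<le> card (Rsup t) \<and> SR \<subseteq> Rsup t)"
begin

definition tS where "tS i = (LEAST k. c+d \<le> cc k i)"
definition tR where "tR j = (LEAST k. a+b \<le> rc k j)"
definition tA where "tA r = (LEAST k. a \<le> rc k r)"
definition tB where "tB q = (LEAST k. c \<le> cc k q)"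

definition Rall where "Rall = {r. a \<le> rc n r}"
definition Call where "Call = {q. c \<le> cc n q}"
definition Orow where "Orow = Rall - SR"
definition Ocol where "Ocol = Call - SC"

lemma tS_props: assumes "i \<in> SC"
  shows "tS i \<le> n" "c+d \<le> cc (tS i) i" "\<And>m. m < tS i \<Longrightarrow> cc m i < c+d"
proof -
  have h: "c+d \<le> cc n i" using assms SCsub unfolding Csup_def by auto
  note l = least_props[of "\<lambda>k. c+d \<le> cc k i", OF h, folded tS_def]
  show "tS i \<le> n" "c+d \<le> cc (tS i) i" using l(1,2) by auto
  show "\<And>m. m < tS i \<Longrightarrow> cc m i < c+d" using l(3) by (meson not_le)
qed
lemma tR_props: assumes "j \<in> SR"
  shows "tR j \<le> n" "a+b \<le> rc (tR j) j" "\<And>m. m < tR j \<Longrightarrow> rc m j < a+b"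
proof -
  have h: "a+b \<le> rc n j" using assms SRsub unfolding Rsup_def by auto
  note l = least_props[of "\<lambda>k. a+b \<le> rc k j", OF h, folded tR_def]
  show "tR j \<le> n" "a+b \<le> rc (tR j) j" using l(1,2) by auto
  show "\<And>m. m < tR j \<Longrightarrow> rc m j < a+b" using l(3) by (meson not_le)
qed
lemma tA_props: assumes "r \<in> Rall"
  shows "tA r \<le> n" "a \<le> rc (tA r) r" "\<And>m. m < tA r \<Longrightarrow> rc m r < a"
proof -
  have h: "a \<le> rc n r" using assms unfolding Rall_def by auto
  note l = least_props[of "\<lambda>k. a \<le> rc k r", OF h, folded tA_def]
  show "tA r \<le> n" "a \<le> rc (tA r) r" using l(1,2) by auto
  show "\<And>m. m < tA r \<Longrightarrow> rc m r < a" using l(3) by (meson not_le)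
qed
lemma tB_props: assumes "q \<in> Call"
  shows "tB q \<le> n" "c \<le> cc (tB q) q" "\<And>m. m < tB q \<Longrightarrow> cc m q < c"
proof -
  have h: "c \<le> cc n q" using assms unfolding Call_def by auto
  note l = least_props[of "\<lambda>k. c \<le> cc k q", OF h, folded tB_def]
  show "tB q \<le> n" "c \<le> cc (tB q) q" using l(1,2) by auto
  show "\<And>m. m < tB q \<Longrightarrow> cc m q < c" using l(3) by (meson not_le)
qed

lemma finSC: "finite SC" using SCsub finCsup finite_subset by blast
lemma finSR: "finite SR" using SRsub finRsup finite_subset by blast
lemma finRall: "finite Rall"
proof -
  have "Rall \<subseteq> snd ` S n"
  proof
    fix i assume "i \<in> Rall"
    then have "1 \<le> rc n i" using a1 unfolding Rall_def by auto
    then have "{y\<in>S n. snd y = i} \<noteq> {}" unfolding rcnt_def by (metis card.empty not_one_le_zero)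
    then obtain y where "y \<in> S n" "snd y = i" by blast
    then show "i \<in> snd ` S n" by (metis image_eqI)
  qed
  then show ?thesis using finS finite_subset by blast
qed
lemma finCall: "finite Call"
proof -
  have "Call \<subseteq> fst ` S n"
  proof
    fix i assume "i \<in> Call"
    then have "1 \<le> cc n i" using c1 unfolding Call_def by auto
    then have "{y\<in>S n. fst y = i} \<noteq> {}" unfolding ccnt_def by (metis card.empty not_one_le_zero)
    then obtain y where "y \<in> S n" "fst y = i" by blast
    then show "i \<in> fst ` S n" by (metis image_eqI)
  qed
  then show ?thesis using finS finite_subset by blast
qed
lemma finOrow: "finite Orow" unfolding Orow_def using finRall by auto
lemma finOcol: "finite Ocol" unfolding Ocol_def using finCall by auto
lemma SC_Call: "SC \<subseteq> Call" using SCsub unfolding Csup_def Call_def by auto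
lemma SR_Rall: "SR \<subseteq> Rall" using SRsub unfolding Rsup_def Rall_def by auto

definition CS where "CS i = {y\<in>A. fst y = i \<and> rc (tS i) (snd y) < a}"
definition CR where "CR j = {y\<in>A. snd y = j \<and> cc (tR j) (fst y) < c}"
definition CO where "CO r = (if 2 \<le> card {y\<in>A. snd y = r} then {y\<in>A. snd y = r \<and> cc (tA r) (fst y) < c+d} else {})"
definition CQ where "CQ q = (if 2 \<le> card {y\<in>A. fst y = q} then {y\<in>A. fst y = q \<and> rc (tB q) (snd y) < a+b} else {})"
definition OS where "OS i = {r \<in> Orow. a \<le> rc (tS i) r \<and> (i,r) \<in> S (tS i)}"
definition KO where "KO r = {i \<in> SC. a \<le> rc (tS i) r \<and> (i,r) \<in> S (tS i)}"
definition OR where "OR j = {q \<in> Ocol. c \<le> cc (tR j) q \<and> (q,j) \<in> S (tR j)}"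
definition KQ where "KQ q = {j \<in> SR. c \<le> cc (tR j) q \<and> (q,j) \<in> S (tR j)}"

lemma L1: assumes iSC: "i \<in> SC" shows "d + 1 \<le> card (CS i) + card (OS i)"
proof -
  define t where "t = tS i"
  note tp = tS_props[OF iSC, folded t_def]
  define X where "X = {y \<in> S t. fst y = i}"
  have cX: "c + d \<le> card X" unfolding X_def using tp(2) unfolding ccnt_def by simp
  define X1 where "X1 = {y\<in>X. rc t (snd y) < a}"
  define X2 where "X2 = {y\<in>X. a \<le> rc t (snd y)}"
  have finX: "finite X" unfolding X_def using finS by auto
  have XU: "X = X1 \<union> X2" unfolding X1_def X2_def by auto
  have c1': "card X \<le> card X1 + card X2" unfolding XU by (rule card_Un_le)
  have X1sub: "X1 \<subseteq> CS i"
  proof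
    fix y assume y: "y \<in> X1"
    then have yS: "y \<in> S t" and yf: "fst y = i" and yr: "rc t (snd y) < a"
      unfolding X1_def X_def by auto
    have "y \<in> A"
    proof (rule ccontr)
      assume "y \<notin> A"
      then have "a \<le> rc t (snd y)" using nonA_colsup[OF yS tp(1)] tp(3) yf by auto
      then show False using yr by simp
    qed
    then show "y \<in> CS i" unfolding CS_def t_def[symmetric] using yf yr by auto
  qed
  have finCS: "finite (CS i)" unfolding CS_def using finA by auto
  have c2: "card X1 \<le> card (CS i)" using card_mono[OF finCS X1sub] .
  have inj: "inj_on snd X2"
  proof (rule inj_onI)
    fix y y' assume "y \<in> X2" "y' \<in> X2" "snd y = snd y'"
    then show "y = y'" unfolding X2_def X_def by (auto intro: prod_eqI)
  qed
  have c3: "card X2 = card (snd ` X2)" using card_image[OF inj] by simp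
  have sub: "snd ` X2 \<subseteq> SR \<union> OS i"
  proof
    fix r assume "r \<in> snd ` X2"
    then obtain y where y: "y \<in> X2" "r = snd y" by blast
    then have yS: "y \<in> S t" and yf: "fst y = i" and ya: "a \<le> rc t r" unfolding X2_def X_def by auto
    have "rc t r \<le> rc n r" using rc_mono[OF tp(1)] .
    then have rR: "r \<in> Rall" using ya unfolding Rall_def by auto
    have yeq: "(i, r) = y" using yf y(2) by (auto intro: prod_eqI)
    show "r \<in> SR \<union> OS i"
    proof (cases "r \<in> SR")
      case True then show ?thesis by simp
    next
      case False
      then have "r \<in> Orow" using rR unfolding Orow_def by auto
      then show ?thesis using ya yS yeq unfolding OS_def t_def by auto
    qed
  qed
  have finOS: "finite (OS i)" unfolding OS_def using finOrow by auto
  have "card (snd ` X2) \<le> card (SR \<union> OS i)" using card_mono[OF _ sub] finSR finOS by auto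
  also have "\<dots> \<le> card SR + card (OS i)" by (rule card_Un_le)
  finally have c4: "card X2 \<le> c - 1 + card (OS i)" using c3 SRcard by simp
  show ?thesis using cX c1' c2 c4 c1 by linarith
qed

end

context LS2 begin

lemma SC_empty_if: "a = 1 \<Longrightarrow> SC = {}" using SCcard finSC by auto
lemma SR_empty_if: "c = 1 \<Longrightarrow> SR = {}" using SRcard finSR by auto

lemma L3: assumes rO: "r \<in> Orow" shows "card (KO r) \<le> card (CO r)"
proof -
  have rR: "r \<in> Rall" using rO unfolding Orow_def by auto
  define t where "t = tA r"
  note tp = tA_props[OF rR, folded t_def]
  have KOsub: "KO r \<subseteq> SC - Csup t"
  proof
    fix i assume "i \<in> KO r"
    then have iSC: "i \<in> SC" and ia: "a \<le> rc (tS i) r" and iS: "(i,r) \<in> S (tS i)"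
      unfolding KO_def by auto
    note sp = tS_props[OF iSC]
    have tle: "t \<le> tS i" unfolding t_def tA_def using ia by (rule Least_le)
    have "cc t i < c+d"
    proof (cases "t < tS i")
      case True then show ?thesis using sp(3) by simp
    next
      case False
      then have teq: "tS i = t" using tle by simp
      show ?thesis
      proof (cases "t = 0")
        case True
        then have iA: "(i,r) \<in> A" using iS teq S0 by simp
        have hc: "c+d \<le> card {y\<in>A. fst y = i}" using sp(2) teq True S0 unfolding ccnt_def by simp
        have ha: "a \<le> card {y\<in>A. snd y = r}" using tp(2) True S0 unfolding rcnt_def by simp
        from thin_alone[OF thinA iA finA] have "card {y\<in>A. snd y = r} \<le> 1 \<or> card {y\<in>A. fst y = i} \<le> 1" by simp
        then show ?thesis
        proof
          assume "card {y\<in>A. snd y = r} \<le> 1"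
          then have "a = 1" using ha a1 by simp
          then show ?thesis using SC_empty_if iSC by simp
        next
          assume "card {y\<in>A. fst y = i} \<le> 1"
          then show ?thesis using hc cd2 by simp
        qed
      next
        case False
        then have t0: "0 < t" by simp
        have r1: "rc (t-1) r < a" using tp(3)[of "t-1"] t0 by simp
        have c2: "cc (t-1) i < c+d" using sp(3)[of "t-1"] t0 teq by simp
        have "Zn a b c d (rc (t-1) r) (cc (t-1) i)" unfolding Zn_def using r1 c2 by simp
        moreover have "rc (t-1) r < rc t r" using r1 tp(2) by simp
        moreover have "cc (t-1) i < cc t i" using c2 sp(2) teq by simp
        ultimately show ?thesis using simul[OF t0 tp(1)] by blast
      qed
    qed
    then show "i \<in> SC - Csup t" using iSC unfolding Csup_def by auto
  qed
  define Y where "Y = {y \<in> S t. snd y = r}"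
  have aY: "a \<le> card Y" unfolding Y_def using tp(2) unfolding rcnt_def by simp
  define Y1 where "Y1 = {y\<in>Y. cc t (fst y) < c+d}"
  define Y2 where "Y2 = {y\<in>Y. c+d \<le> cc t (fst y)}"
  define D where "D = {y\<in>A. snd y = r \<and> cc t (fst y) < c+d}"
  have YU: "Y = Y1 \<union> Y2" unfolding Y1_def Y2_def by auto
  have cY: "card Y \<le> card Y1 + card Y2" unfolding YU by (rule card_Un_le)
  have Y1sub: "Y1 \<subseteq> D"
  proof
    fix y assume y: "y \<in> Y1"
    then have yS: "y \<in> S t" and yr: "snd y = r" and yc: "cc t (fst y) < c+d"
      unfolding Y1_def Y_def by auto
    have "y \<in> A"
    proof (rule ccontr)
      assume "y \<notin> A"
      then have "c+d \<le> cc t (fst y)" using nonA_rowact[OF yS tp(1)] tp(3) yr by auto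
      then show False using yc by simp
    qed
    then show "y \<in> D" unfolding D_def using yr yc by auto
  qed
  have finD: "finite D" unfolding D_def using finA by auto
  have cY1: "card Y1 \<le> card D" using card_mono[OF finD Y1sub] .
  have inj: "inj_on fst Y2"
  proof (rule inj_onI)
    fix y y' assume "y \<in> Y2" "y' \<in> Y2" "fst y = fst y'"
    then show "y = y'" unfolding Y2_def Y_def by (auto intro: prod_eqI)
  qed
  have sub: "fst ` Y2 \<subseteq> Csup t" unfolding Y2_def Csup_def by auto
  have cY2: "card Y2 \<le> card (Csup t)"
    using card_image[OF inj] card_mono[OF finCsup sub] by simp
  have key: "a \<le> card D + card (Csup t)" using aY cY cY1 cY2 by linarith
  have finKO: "finite (KO r)" unfolding KO_def using finSC by auto
  from SCchain[of t] show ?thesis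
  proof
    assume h: "card (Csup t) < a - 1 \<and> Csup t \<subseteq> SC"
    have D2: "2 \<le> card D" using key h by linarith
    have "D \<subseteq> {y\<in>A. snd y = r}" unfolding D_def by auto
    then have "card D \<le> card {y\<in>A. snd y = r}" using finA by (intro card_mono) auto
    then have A2: "2 \<le> card {y\<in>A. snd y = r}" using D2 by linarith
    have COeq: "CO r = D" using A2 unfolding CO_def D_def t_def by simp
    have "card (SC - Csup t) = card SC - card (Csup t)"
      using h finCsup by (simp add: card_Diff_subset)
    then have "card (SC - Csup t) = a - 1 - card (Csup t)" using SCcard by simp
    moreover have "card (KO r) \<le> card (SC - Csup t)" using KOsub finSC by (intro card_mono) auto
    ultimately have "card (KO r) \<le> card D" using key h by linarith
    then show ?thesis using COeq by simp
  next
    assume h: "a - 1 \<le> card (Csup t) \<and> SC \<subseteq> Csup t"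
    then have "KO r = {}" using KOsub by auto
    then show ?thesis by simp
  qed
qed

end

context LS2 begin

lemma L2: assumes jSR: "j \<in> SR" shows "b + 1 \<le> card (CR j) + card (OR j)"
proof -
  define t where "t = tR j"
  note tp = tR_props[OF jSR, folded t_def]
  define X where "X = {y \<in> S t. snd y = j}"
  have cX: "a + b \<le> card X" unfolding X_def using tp(2) unfolding rcnt_def by simp
  define X1 where "X1 = {y\<in>X. cc t (fst y) < c}"
  define X2 where "X2 = {y\<in>X. c \<le> cc t (fst y)}"
  have XU: "X = X1 \<union> X2" unfolding X1_def X2_def by auto
  have c1': "card X \<le> card X1 + card X2" unfolding XU by (rule card_Un_le)
  have X1sub: "X1 \<subseteq> CR j"
  proof
    fix y assume y: "y \<in> X1"
    then have yS: "y \<in> S t" and yf: "snd y = j" and yr: "cc t (fst y) < c"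
      unfolding X1_def X_def by auto
    have "y \<in> A"
    proof (rule ccontr)
      assume "y \<notin> A"
      then have "c \<le> cc t (fst y)" using nonA_rowsup[OF yS tp(1)] tp(3) yf by auto
      then show False using yr by simp
    qed
    then show "y \<in> CR j" unfolding CR_def t_def[symmetric] using yf yr by auto
  qed
  have finCR: "finite (CR j)" unfolding CR_def using finA by auto
  have c2: "card X1 \<le> card (CR j)" using card_mono[OF finCR X1sub] .
  have inj: "inj_on fst X2"
  proof (rule inj_onI)
    fix y y' assume "y \<in> X2" "y' \<in> X2" "fst y = fst y'"
    then show "y = y'" unfolding X2_def X_def by (auto intro: prod_eqI)
  qed
  have c3: "card X2 = card (fst ` X2)" using card_image[OF inj] by simp
  have sub: "fst ` X2 \<subseteq> SC \<union> OR j"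
  proof
    fix q assume "q \<in> fst ` X2"
    then obtain y where y: "y \<in> X2" "q = fst y" by blast
    then have yS: "y \<in> S t" and yf: "snd y = j" and ya: "c \<le> cc t q" unfolding X2_def X_def by auto
    have "cc t q \<le> cc n q" using cc_mono[OF tp(1)] .
    then have qC: "q \<in> Call" using ya unfolding Call_def by auto
    have yeq: "(q, j) = y" using yf y(2) by (auto intro: prod_eqI)
    show "q \<in> SC \<union> OR j"
    proof (cases "q \<in> SC")
      case True then show ?thesis by simp
    next
      case False
      then have "q \<in> Ocol" using qC unfolding Ocol_def by auto
      then show ?thesis using ya yS yeq unfolding OR_def t_def by auto
    qed
  qed
  have finOR: "finite (OR j)" unfolding OR_def using finOcol by auto
  have "card (fst ` X2) \<le> card (SC \<union> OR j)" using card_mono[OF _ sub] finSC finOR by auto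
  also have "\<dots> \<le> card SC + card (OR j)" by (rule card_Un_le)
  finally have c4: "card X2 \<le> a - 1 + card (OR j)" using c3 SCcard by simp
  show ?thesis using cX c1' c2 c4 a1 by linarith
qed

lemma L4: assumes qO: "q \<in> Ocol" shows "card (KQ q) \<le> card (CQ q)"
proof -
  have qC: "q \<in> Call" using qO unfolding Ocol_def by auto
  define t where "t = tB q"
  note tp = tB_props[OF qC, folded t_def]
  have KQsub: "KQ q \<subseteq> SR - Rsup t"
  proof
    fix j assume "j \<in> KQ q"
    then have jSR: "j \<in> SR" and ja: "c \<le> cc (tR j) q" and jS: "(q,j) \<in> S (tR j)"
      unfolding KQ_def by auto
    note sp = tR_props[OF jSR]
    have tle: "t \<le> tR j" unfolding t_def tB_def using ja by (rule Least_le)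
    have "rc t j < a+b"
    proof (cases "t < tR j")
      case True then show ?thesis using sp(3) by simp
    next
      case False
      then have teq: "tR j = t" using tle by simp
      show ?thesis
      proof (cases "t = 0")
        case True
        then have iA: "(q,j) \<in> A" using jS teq S0 by simp
        have hc: "a+b \<le> card {y\<in>A. snd y = j}" using sp(2) teq True S0 unfolding rcnt_def by simp
        have ha: "c \<le> card {y\<in>A. fst y = q}" using tp(2) True S0 unfolding ccnt_def by simp
        from thin_alone[OF thinA iA finA] have "card {y\<in>A. snd y = j} \<le> 1 \<or> card {y\<in>A. fst y = q} \<le> 1" by simp
        then show ?thesis
        proof
          assume "card {y\<in>A. fst y = q} \<le> 1"
          then have "c = 1" using ha c1 by simp
          then show ?thesis using SR_empty_if jSR by simp
        next
          assume "card {y\<in>A. snd y = j} \<le> 1"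
          then show ?thesis using hc ab2 by simp
        qed
      next
        case False
        then have t0: "0 < t" by simp
        have r1: "cc (t-1) q < c" using tp(3)[of "t-1"] t0 by simp
        have c2: "rc (t-1) j < a+b" using sp(3)[of "t-1"] t0 teq by simp
        have "Zn a b c d (rc (t-1) j) (cc (t-1) q)" unfolding Zn_def using r1 c2 by simp
        moreover have "cc (t-1) q < cc t q" using r1 tp(2) by simp
        moreover have "rc (t-1) j < rc t j" using c2 sp(2) teq by simp
        ultimately show ?thesis using simul[OF t0 tp(1)] by blast
      qed
    qed
    then show "j \<in> SR - Rsup t" using jSR unfolding Rsup_def by auto
  qed
  define Y where "Y = {y \<in> S t. fst y = q}"
  have aY: "c \<le> card Y" unfolding Y_def using tp(2) unfolding ccnt_def by simp
  define Y1 where "Y1 = {y\<in>Y. rc t (snd y) < a+b}"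
  define Y2 where "Y2 = {y\<in>Y. a+b \<le> rc t (snd y)}"
  define D where "D = {y\<in>A. fst y = q \<and> rc t (snd y) < a+b}"
  have YU: "Y = Y1 \<union> Y2" unfolding Y1_def Y2_def by auto
  have cY: "card Y \<le> card Y1 + card Y2" unfolding YU by (rule card_Un_le)
  have Y1sub: "Y1 \<subseteq> D"
  proof
    fix y assume y: "y \<in> Y1"
    then have yS: "y \<in> S t" and yr: "fst y = q" and yc: "rc t (snd y) < a+b"
      unfolding Y1_def Y_def by auto
    have "y \<in> A"
    proof (rule ccontr)
      assume "y \<notin> A"
      then have "a+b \<le> rc t (snd y)" using nonA_colact[OF yS tp(1)] tp(3) yr by auto
      then show False using yc by simp
    qed
    then show "y \<in> D" unfolding D_def using yr yc by auto
  qed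
  have finD: "finite D" unfolding D_def using finA by auto
  have cY1: "card Y1 \<le> card D" using card_mono[OF finD Y1sub] .
  have inj: "inj_on snd Y2"
  proof (rule inj_onI)
    fix y y' assume "y \<in> Y2" "y' \<in> Y2" "snd y = snd y'"
    then show "y = y'" unfolding Y2_def Y_def by (auto intro: prod_eqI)
  qed
  have sub: "snd ` Y2 \<subseteq> Rsup t" unfolding Y2_def Rsup_def by auto
  have cY2: "card Y2 \<le> card (Rsup t)"
    using card_image[OF inj] card_mono[OF finRsup sub] by simp
  have key: "c \<le> card D + card (Rsup t)" using aY cY cY1 cY2 by linarith
  from SRchain[of t] show ?thesis
  proof
    assume h: "card (Rsup t) < c - 1 \<and> Rsup t \<subseteq> SR"
    have D2: "2 \<le> card D" using key h by linarith
    have "D \<subseteq> {y\<in>A. fst y = q}" unfolding D_def by auto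
    then have "card D \<le> card {y\<in>A. fst y = q}" using finA by (intro card_mono) auto
    then have A2: "2 \<le> card {y\<in>A. fst y = q}" using D2 by linarith
    have CQeq: "CQ q = D" using A2 unfolding CQ_def D_def t_def by simp
    have "card (SR - Rsup t) = card SR - card (Rsup t)"
      using h finRsup by (simp add: card_Diff_subset)
    then have "card (SR - Rsup t) = c - 1 - card (Rsup t)" using SRcard by simp
    moreover have "card (KQ q) \<le> card (SR - Rsup t)" using KQsub finSR by (intro card_mono) auto
    ultimately have "card (KQ q) \<le> card D" using key h by linarith
    then show ?thesis using CQeq by simp
  next
    assume h: "c - 1 \<le> card (Rsup t) \<and> SR \<subseteq> Rsup t"
    then have "KQ q = {}" using KQsub by auto
    then show ?thesis by simp
  qed
qed

end

lemma double_count: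
  assumes "finite X" "finite Y"
  shows "(\<Sum>x\<in>X. card {y\<in>Y. P x y}) = (\<Sum>y\<in>Y. card {x\<in>X. P x y})"
proof -
  have "\<And>x. card {y\<in>Y. P x y} = (\<Sum>y\<in>Y. if P x y then 1 else 0)"
    unfolding card_eq_sum by (rule sum.inter_filter[OF assms(2)])
  moreover have "\<And>y. card {x\<in>X. P x y} = (\<Sum>x\<in>X. if P x y then 1 else 0)"
    unfolding card_eq_sum by (rule sum.inter_filter[OF assms(1)])
  ultimately show ?thesis using sum.swap[of "\<lambda>x y. if P x y then (1::nat) else 0" Y X] by simp
qed

context LS2 begin

lemma CO_mem: "y \<in> CO r \<Longrightarrow> y \<in> A \<and> snd y = r \<and> cc (tA r) (fst y) < c+d \<and> 2 \<le> card {y\<in>A. snd y = r}"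
  unfolding CO_def by (auto split: if_splits)
lemma CQ_mem: "y \<in> CQ q \<Longrightarrow> y \<in> A \<and> fst y = q \<and> rc (tB q) (snd y) < a+b \<and> 2 \<le> card {y\<in>A. fst y = q}"
  unfolding CQ_def by (auto split: if_splits)

lemma D12: assumes "i \<in> SC" "j \<in> SR" shows "CS i \<inter> CR j = {}"
proof (rule ccontr)
  assume "CS i \<inter> CR j \<noteq> {}"
  then obtain y where y: "y \<in> CS i" "y \<in> CR j" by blast
  then have f: "fst y = i" and s: "snd y = j" and h1: "rc (tS i) j < a" and h2: "cc (tR j) i < c"
    unfolding CS_def CR_def by auto
  note sp = tS_props[OF assms(1)] and rp = tR_props[OF assms(2)]
  show False
  proof (cases "tS i \<le> tR j")
    case True
    then have "cc (tS i) i \<le> cc (tR j) i" by (rule cc_mono)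
    then show False using sp(2) h2 by linarith
  next
    case False
    then have "rc (tR j) j \<le> rc (tS i) j" by (intro rc_mono) simp
    then show False using rp(2) h1 by linarith
  qed
qed

lemma D13: assumes "i \<in> SC" "r \<in> Orow" shows "CS i \<inter> CO r = {}"
proof (rule ccontr)
  assume "CS i \<inter> CO r \<noteq> {}"
  then obtain y where y: "y \<in> CS i" "y \<in> CO r" by blast
  then have f: "fst y = i" and s: "snd y = r" and h1: "rc (tS i) r < a" and h2: "cc (tA r) i < c+d"
    unfolding CS_def using CO_mem[of y r] by auto
  have rR: "r \<in> Rall" using assms(2) unfolding Orow_def by auto
  note sp = tS_props[OF assms(1)] and rp = tA_props[OF rR]
  show False
  proof (cases "tA r \<le> tS i")
    case True
    then have "rc (tA r) r \<le> rc (tS i) r" by (rule rc_mono)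
    then show False using rp(2) h1 by linarith
  next
    case False
    then have "cc (tS i) i \<le> cc (tA r) i" by (intro cc_mono) simp
    then show False using sp(2) h2 by linarith
  qed
qed

lemma D24: assumes "j \<in> SR" "q \<in> Ocol" shows "CR j \<inter> CQ q = {}"
proof (rule ccontr)
  assume "CR j \<inter> CQ q \<noteq> {}"
  then obtain y where y: "y \<in> CR j" "y \<in> CQ q" by blast
  then have s: "snd y = j" and f: "fst y = q" and h1: "cc (tR j) q < c" and h2: "rc (tB q) j < a+b"
    unfolding CR_def using CQ_mem[of y q] by auto
  have qC: "q \<in> Call" using assms(2) unfolding Ocol_def by auto
  note sp = tR_props[OF assms(1)] and rp = tB_props[OF qC]
  show False
  proof (cases "tB q \<le> tR j")
    case True
    then have "cc (tB q) q \<le> cc (tR j) q" by (rule cc_mono)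
    then show False using rp(2) h1 by linarith
  next
    case False
    then have "rc (tR j) j \<le> rc (tB q) j" by (intro rc_mono) simp
    then show False using sp(2) h2 by linarith
  qed
qed

lemma D34: "CO r \<inter> CQ q = {}"
proof (rule ccontr)
  assume "CO r \<inter> CQ q \<noteq> {}"
  then obtain y where y: "y \<in> CO r" "y \<in> CQ q" by blast
  note h1 = CO_mem[OF y(1)] and h2 = CQ_mem[OF y(2)]
  from thin_alone[OF thinA _ finA, of y] h1 have "card {z\<in>A. snd z = snd y} \<le> 1 \<or> card {z\<in>A. fst z = fst y} \<le> 1" by simp
  then show False using h1 h2 by auto
qed

end

context LS2 begin
lemma half1_lem: "(a-1)*(d+1) \<le> (\<Sum>i\<in>SC. card (CS i)) + (\<Sum>i\<in>Orow. card (CO i))"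
proof -
  have h1: "(a-1)*(d+1) \<le> (\<Sum>i\<in>SC. card (CS i) + card (OS i))"
    using sum_bounded_below[of SC "d+1" "\<lambda>i. card (CS i) + card (OS i)"] L1 SCcard by (simp add: mult.commute)
  have dc1: "(\<Sum>i\<in>SC. card (OS i)) = (\<Sum>r\<in>Orow. card (KO r))"
    unfolding OS_def KO_def by (rule double_count[OF finSC finOrow])
  have h1b: "(\<Sum>r\<in>Orow. card (KO r)) \<le> (\<Sum>r\<in>Orow. card (CO r))" using L3 by (intro sum_mono) auto
  have "(\<Sum>i\<in>SC. card (CS i) + card (OS i)) = (\<Sum>i\<in>SC. card (CS i)) + (\<Sum>i\<in>SC. card (OS i))"
    by (rule sum.distrib)
  then show ?thesis using h1 dc1 h1b by linarith
qed

lemma half2_lem: "(c-1)*(b+1) \<le> (\<Sum>i\<in>SR. card (CR i)) + (\<Sum>i\<in>Ocol. card (CQ i))"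
proof -
  have h2: "(c-1)*(b+1) \<le> (\<Sum>j\<in>SR. card (CR j) + card (OR j))"
    using sum_bounded_below[of SR "b+1" "\<lambda>j. card (CR j) + card (OR j)"] L2 SRcard by (simp add: mult.commute)
  have dc2: "(\<Sum>j\<in>SR. card (OR j)) = (\<Sum>q\<in>Ocol. card (KQ q))"
  proof -
    have "(\<Sum>j\<in>SR. card {q\<in>Ocol. c \<le> cc (tR j) q \<and> (q,j) \<in> S (tR j)})
        = (\<Sum>q\<in>Ocol. card {j\<in>SR. c \<le> cc (tR j) q \<and> (q,j) \<in> S (tR j)})"
      by (rule double_count[OF finSR finOcol])
    then show ?thesis unfolding OR_def KQ_def .
  qed
  have h2b: "(\<Sum>q\<in>Ocol. card (KQ q)) \<le> (\<Sum>q\<in>Ocol. card (CQ q))" using L4 by (intro sum_mono) auto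
  have "(\<Sum>j\<in>SR. card (CR j) + card (OR j)) = (\<Sum>j\<in>SR. card (CR j)) + (\<Sum>j\<in>SR. card (OR j))"
    by (rule sum.distrib)
  then show ?thesis using h2 dc2 h2b by linarith
qed

end

context LS2 begin
theorem main_bound: "(a-1)*(d+1) + (c-1)*(b+1) \<le> card A"
proof -
  define U1 where "U1 = \<Union>(CS ` SC)"
  define U2 where "U2 = \<Union>(CR ` SR)"
  define U3 where "U3 = \<Union>(CO ` Orow)"
  define U4 where "U4 = \<Union>(CQ ` Ocol)"
  have fCS: "\<And>i. finite (CS i)" unfolding CS_def using finA by auto
  have fCR: "\<And>i. finite (CR i)" unfolding CR_def using finA by auto
  have fCO: "\<And>i. finite (CO i)" unfolding CO_def using finA by auto
  have fCQ: "\<And>i. finite (CQ i)" unfolding CQ_def using finA by auto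
  have dCS: "\<forall>i\<in>SC. \<forall>j\<in>SC. i \<noteq> j \<longrightarrow> CS i \<inter> CS j = {}" unfolding CS_def by auto
  have dCR: "\<forall>i\<in>SR. \<forall>j\<in>SR. i \<noteq> j \<longrightarrow> CR i \<inter> CR j = {}" unfolding CR_def by auto
  have dCO: "\<forall>i\<in>Orow. \<forall>j\<in>Orow. i \<noteq> j \<longrightarrow> CO i \<inter> CO j = {}"
  proof (intro ballI impI)
    fix i j :: nat assume "i \<in> Orow" "j \<in> Orow" "i \<noteq> j"
    show "CO i \<inter> CO j = {}"
    proof (rule ccontr)
      assume "CO i \<inter> CO j \<noteq> {}"
      then obtain y where "y \<in> CO i" "y \<in> CO j" by blast
      then show False using CO_mem[of y i] CO_mem[of y j] \<open>i \<noteq> j\<close> by simp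
    qed
  qed
  have dCQ: "\<forall>i\<in>Ocol. \<forall>j\<in>Ocol. i \<noteq> j \<longrightarrow> CQ i \<inter> CQ j = {}"
  proof (intro ballI impI)
    fix i j :: nat assume "i \<in> Ocol" "j \<in> Ocol" "i \<noteq> j"
    show "CQ i \<inter> CQ j = {}"
    proof (rule ccontr)
      assume "CQ i \<inter> CQ j \<noteq> {}"
      then obtain y where "y \<in> CQ i" "y \<in> CQ j" by blast
      then show False using CQ_mem[of y i] CQ_mem[of y j] \<open>i \<noteq> j\<close> by simp
    qed
  qed
  have cU1: "card U1 = (\<Sum>i\<in>SC. card (CS i))" unfolding U1_def
    using card_UN_disjoint[OF finSC _ dCS] fCS by simp
  have cU2: "card U2 = (\<Sum>i\<in>SR. card (CR i))" unfolding U2_def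
    using card_UN_disjoint[OF finSR _ dCR] fCR by simp
  have cU3: "card U3 = (\<Sum>i\<in>Orow. card (CO i))" unfolding U3_def
    using card_UN_disjoint[OF finOrow _ dCO] fCO by simp
  have cU4: "card U4 = (\<Sum>i\<in>Ocol. card (CQ i))" unfolding U4_def
    using card_UN_disjoint[OF finOcol _ dCQ] fCQ by simp
  have fU1: "finite U1" unfolding U1_def using finSC fCS by auto
  have fU2: "finite U2" unfolding U2_def using finSR fCR by auto
  have fU3: "finite U3" unfolding U3_def using finOrow fCO by auto
  have fU4: "finite U4" unfolding U4_def using finOcol fCQ by auto
  have d12: "U1 \<inter> U2 = {}" unfolding U1_def U2_def using D12 by blast
  have d13: "U1 \<inter> U3 = {}" unfolding U1_def U3_def using D13 by blast
  have d14: "U1 \<inter> U4 = {}"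
  proof -
    have "\<And>i q. i \<in> SC \<Longrightarrow> q \<in> Ocol \<Longrightarrow> CS i \<inter> CQ q = {}"
    proof (rule ccontr)
      fix i q assume iq: "i \<in> SC" "q \<in> Ocol" "CS i \<inter> CQ q \<noteq> {}"
      then obtain y where y: "y \<in> CS i" "y \<in> CQ q" by blast
      have "fst y = i" using y(1) unfolding CS_def by simp
      moreover have "fst y = q" using CQ_mem[OF y(2)] by simp
      ultimately show False using iq unfolding Ocol_def by simp
    qed
    then show ?thesis unfolding U1_def U4_def by blast
  qed
  have d23: "U2 \<inter> U3 = {}"
  proof -
    have "\<And>j r. j \<in> SR \<Longrightarrow> r \<in> Orow \<Longrightarrow> CR j \<inter> CO r = {}"
    proof (rule ccontr)
      fix j r assume jr: "j \<in> SR" "r \<in> Orow" "CR j \<inter> CO r \<noteq> {}"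
      then obtain y where y: "y \<in> CR j" "y \<in> CO r" by blast
      have "snd y = j" using y(1) unfolding CR_def by simp
      moreover have "snd y = r" using CO_mem[OF y(2)] by simp
      ultimately show False using jr unfolding Orow_def by simp
    qed
    then show ?thesis unfolding U2_def U3_def by blast
  qed
  have d24: "U2 \<inter> U4 = {}" unfolding U2_def U4_def using D24 by blast
  have d34: "U3 \<inter> U4 = {}" unfolding U3_def U4_def using D34 by blast
  have s1: "U1 \<subseteq> A" unfolding U1_def CS_def by auto
  have s2: "U2 \<subseteq> A" unfolding U2_def CR_def by auto
  have s3: "U3 \<subseteq> A" unfolding U3_def using CO_mem by blast
  have s4: "U4 \<subseteq> A" unfolding U4_def using CQ_mem by blast
  have sub: "U1 \<union> U2 \<union> U3 \<union> U4 \<subseteq> A" using s1 s2 s3 s4 by blast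
  have "card (U1 \<union> U2 \<union> U3 \<union> U4) = card U1 + card U2 + card U3 + card U4"
  proof -
    have e1: "card (U1 \<union> U2) = card U1 + card U2" using card_Un_disjoint[OF fU1 fU2 d12] .
    have e2: "card (U1 \<union> U2 \<union> U3) = card (U1 \<union> U2) + card U3"
      using card_Un_disjoint[of "U1 \<union> U2" U3] fU1 fU2 fU3 d13 d23 by auto
    have e3: "card (U1 \<union> U2 \<union> U3 \<union> U4) = card (U1 \<union> U2 \<union> U3) + card U4"
      using card_Un_disjoint[of "U1 \<union> U2 \<union> U3" U4] fU1 fU2 fU3 fU4 d14 d24 d34 by auto
    show ?thesis using e1 e2 e3 by simp
  qed
  moreover have "card (U1 \<union> U2 \<union> U3 \<union> U4) \<le> card A" using card_mono[OF finA sub] .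
  ultimately have tot: "card U1 + card U2 + card U3 + card U4 \<le> card A" by simp
  have half1: "(a-1)*(d+1) \<le> card U1 + card U3" using half1_lem cU1 cU3 by simp
  have half2: "(c-1)*(b+1) \<le> card U2 + card U4" using half2_lem cU2 cU4 by simp
  show ?thesis using tot half1 half2 by linarith
qed

end

context LS begin

lemma manyC: "a - 1 \<le> card (Csup n)"
proof -
  have "{..<a-1} \<subseteq> Csup n" using boxC unfolding Csup_def S_def by auto
  then have "card {..<a-1} \<le> card (Csup n)" using finCsup by (intro card_mono) auto
  then show ?thesis by simp
qed
lemma manyR: "c - 1 \<le> card (Rsup n)"
proof -
  have "{..<c-1} \<subseteq> Rsup n" using boxR unfolding Rsup_def S_def by auto
  then have "card {..<c-1} \<le> card (Rsup n)" using finRsup by (intro card_mono) auto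
  then show ?thesis by simp
qed

theorem LS_bound: "(a-1)*(d+1) + (c-1)*(b+1) \<le> card A"
proof -
  obtain SC where SC: "card SC = a - 1" "SC \<subseteq> Csup n"
    "\<forall>t. (card (Csup t) < a - 1 \<and> Csup t \<subseteq> SC) \<or> (a - 1 \<le> card (Csup t) \<and> SC \<subseteq> Csup t)"
    using chain_choice[of Csup "a - 1" n] Csup_mono finCsup manyC by blast
  obtain SR where SR: "card SR = c - 1" "SR \<subseteq> Rsup n"
    "\<forall>t. (card (Rsup t) < c - 1 \<and> Rsup t \<subseteq> SR) \<or> (c - 1 \<le> card (Rsup t) \<and> SR \<subseteq> Rsup t)"
    using chain_choice[of Rsup "c - 1" n] Rsup_mono finRsup manyR by blast
  interpret L2: LS2 a b c d A p n SC SR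
    by unfold_locales (use SC SR in auto)
  show ?thesis by (rule L2.main_bound)
qed

end

definition legal :: "nat\<Rightarrow>nat\<Rightarrow>nat\<Rightarrow>nat\<Rightarrow>point set \<Rightarrow> (nat \<Rightarrow> point) \<Rightarrow> nat \<Rightarrow> bool" where
  "legal a b c d A p n \<longleftrightarrow> finite A \<and> (\<forall>k<n. p k \<notin> A \<union> p ` {..<k} \<and>
     \<not> Zn a b c d (rcnt (A \<union> p ` {..<k}) (snd (p k))) (ccnt (A \<union> p ` {..<k}) (fst (p k))))"

lemma Zn_down: "Zn a b c d i j \<Longrightarrow> i' \<le> i \<Longrightarrow> j' \<le> j \<Longrightarrow> Zn a b c d i' j'"
  unfolding Zn_def by linarith

lemma extend:
  assumes lg: "legal a b c d A p n" and fG: "finite G"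
    and hyp: "\<forall>x\<in>G. \<forall>S'. finite S' \<longrightarrow> A \<union> p ` {..<n} \<subseteq> S' \<longrightarrow> \<not> Zn a b c d (rcnt S' (snd x)) (ccnt S' (fst x))"
  shows "\<exists>p' n'. legal a b c d A p' n' \<and> A \<union> p ` {..<n} \<union> G \<subseteq> A \<union> p' ` {..<n'}"
  using fG hyp
proof (induction G rule: finite_induct)
  case empty
  then show ?case using lg by blast
next
  case (insert x G)
  then obtain p' n' where IH: "legal a b c d A p' n'" "A \<union> p ` {..<n} \<union> G \<subseteq> A \<union> p' ` {..<n'}"
    by blast
  show ?case
  proof (cases "x \<in> A \<union> p' ` {..<n'}")
    case True
    then show ?thesis using IH by blast
  next
    case False
    note xn = False
    define q where "q = p'(n' := x)"
    have img: "\<And>k. k \<le> n' \<Longrightarrow> q ` {..<k} = p' ` {..<k}" unfolding q_def by auto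
    have finA: "finite A" using IH(1) unfolding legal_def by simp
    have "legal a b c d A q (Suc n')"
      unfolding legal_def
    proof (rule conjI[OF finA], intro allI impI)
      fix k assume k: "k < Suc n'"
      show "q k \<notin> A \<union> q ` {..<k} \<and>
        \<not> Zn a b c d (rcnt (A \<union> q ` {..<k}) (snd (q k))) (ccnt (A \<union> q ` {..<k}) (fst (q k)))"
      proof (cases "k < n'")
        case True
        then have "q k = p' k" unfolding q_def by simp
        moreover have "q ` {..<k} = p' ` {..<k}" using img True by simp
        ultimately show ?thesis using IH(1) True unfolding legal_def by simp
      next
        case False
        then have kn: "k = n'" using k by simp
        then have qk: "q k = x" unfolding q_def by simp
        have qi: "q ` {..<k} = p' ` {..<n'}" using img kn by simp
        have fin: "finite (A \<union> p' ` {..<n'})" using finA by simp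
        have "\<not> Zn a b c d (rcnt (A \<union> p' ` {..<n'}) (snd x)) (ccnt (A \<union> p' ` {..<n'}) (fst x))"
          using insert.prems fin IH(2) by blast
        then show ?thesis using qk qi xn by simp
      qed
    qed
    moreover have "A \<union> p ` {..<n} \<union> insert x G \<subseteq> A \<union> q ` {..<Suc n'}"
    proof -
      have "q ` {..<Suc n'} = insert x (p' ` {..<n'})"
        using img[of n'] unfolding lessThan_Suc q_def by auto
      then show ?thesis using IH(2) by auto
    qed
    ultimately show ?thesis by blast
  qed
qed

lemma in_zero_iff: "in_zero (Rect (a+b) c \<union> Rect a (c+d)) r s \<longleftrightarrow> (\<exists>i j. Zn a b c d i j \<and> r = enat i \<and> s = enat j)"
  unfolding in_zero_def Rect_def Zn_def by auto

lemma subset_card_le: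
  assumes "finite R \<Longrightarrow> i \<le> card R"
  shows "\<exists>W. finite W \<and> W \<subseteq> R \<and> card W = i"
proof (cases "finite R")
  case True
  then obtain W where "W \<subseteq> R" "card W = i" "finite W" using obtain_subset_with_card_n assms by metis
  then show ?thesis by blast
next
  case False
  then show ?thesis using infinite_arbitrarily_large by blast
qed

lemma witness:
  assumes nz: "\<not> in_zero (Rect (a+b) c \<union> Rect a (c+d)) (row x B) (col x B)"
  shows "\<exists>W. finite W \<and> W \<subseteq> B \<and> (\<forall>S'. finite S' \<longrightarrow> W \<subseteq> S' \<longrightarrow> \<not> Zn a b c d (rcnt S' (snd x)) (ccnt S' (fst x)))"
proof -
  define R where "R = {y\<in>B. snd y = snd x}"
  define C where "C = {y\<in>B. fst y = fst x}"
  define i where "i = (if finite R then min (card R) (a+b) else a+b)"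
  define j where "j = (if finite C then min (card C) (c+d) else c+d)"
  have nZ: "\<not> Zn a b c d i j"
  proof
    assume z: "Zn a b c d i j"
    then have "i < a+b" "j < c+d" unfolding Zn_def by auto
    then have fR: "finite R" and iR: "i = card R" and fC: "finite C" and jC: "j = card C"
      unfolding i_def j_def by (auto split: if_splits)
    have "row x B = enat i" unfolding row_def ecount_def R_def[symmetric] using fR iR by simp
    moreover have "col x B = enat j" unfolding col_def ecount_def C_def[symmetric] using fC jC by simp
    ultimately show False using nz z unfolding in_zero_iff by blast
  qed
  obtain Wr where Wr: "finite Wr" "Wr \<subseteq> R" "card Wr = i"
    using subset_card_le[of R i] unfolding i_def by fastforce
  obtain Wc where Wc: "finite Wc" "Wc \<subseteq> C" "card Wc = j"
    using subset_card_le[of C j] unfolding j_def by fastforce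
  have "\<forall>S'. finite S' \<longrightarrow> Wr \<union> Wc \<subseteq> S' \<longrightarrow> \<not> Zn a b c d (rcnt S' (snd x)) (ccnt S' (fst x))"
  proof (intro allI impI)
    fix S' assume fS: "finite S'" and sub: "Wr \<union> Wc \<subseteq> S'"
    have "Wr \<subseteq> {y\<in>S'. snd y = snd x}" using sub Wr(2) unfolding R_def by auto
    then have "i \<le> rcnt S' (snd x)" unfolding rcnt_def using Wr(3) fS by (metis (no_types, lifting) card_mono finite_subset mem_Collect_eq subsetI)
    moreover have "Wc \<subseteq> {y\<in>S'. fst y = fst x}" using sub Wc(2) unfolding C_def by auto
    then have "j \<le> ccnt S' (fst x)" unfolding ccnt_def using Wc(3) fS by (metis (no_types, lifting) card_mono finite_subset mem_Collect_eq subsetI)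
    ultimately show "\<not> Zn a b c d (rcnt S' (snd x)) (ccnt S' (fst x))" using nZ Zn_down by blast
  qed
  moreover have "Wr \<union> Wc \<subseteq> B" using Wr(2) Wc(2) unfolding R_def C_def by auto
  ultimately show ?thesis using Wr(1) Wc(1) by blast
qed


lemma T_sub: "B \<subseteq> T Z B" unfolding T_def by auto

lemma levels_mono: "t \<le> t' \<Longrightarrow> (T Z ^^ t) A \<subseteq> (T Z ^^ t') A"
proof -
  assume "t \<le> t'"
  moreover have "\<And>k. (T Z ^^ k) A \<subseteq> (T Z ^^ Suc k) A" using T_sub by simp
  ultimately show ?thesis using lift_Suc_mono_le[of "\<lambda>k. (T Z ^^ k) A"] by blast
qed

lemma reach_levels:
  assumes finA: "finite A"
  shows "finite F \<Longrightarrow> F \<subseteq> (T (Rect (a+b) c \<union> Rect a (c+d)) ^^ t) A \<Longrightarrow> \<exists>p n. legal a b c d A p n \<and> F \<subseteq> A \<union> p ` {..<n}"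
proof (induction t arbitrary: F)
  case 0
  then have "legal a b c d A (\<lambda>_. (0,0)) 0" "F \<subseteq> A \<union> (\<lambda>_. (0,0)) ` {..<0}"
    using finA unfolding legal_def by auto
  then show ?case by blast
next
  case (Suc t)
  define Z where "Z = Rect (a+b) c \<union> Rect a (c+d)"
  define B where "B = (T Z ^^ t) A"
  have FT: "F \<subseteq> T Z B" using Suc.prems(2) unfolding B_def Z_def by (simp only: funpow.simps comp_apply)
  define G where "G = F - B"
  have fG: "finite G" unfolding G_def using Suc.prems by simp
  have "\<forall>x\<in>G. \<exists>W. finite W \<and> W \<subseteq> B \<and> (\<forall>S'. finite S' \<longrightarrow> W \<subseteq> S' \<longrightarrow> \<not> Zn a b c d (rcnt S' (snd x)) (ccnt S' (fst x)))"
  proof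
    fix x assume "x \<in> G"
    then have "x \<in> T Z B" "x \<notin> B" using FT unfolding G_def by auto
    then have "\<not> in_zero Z (row x B) (col x B)" unfolding T_def by simp
    then show "\<exists>W. finite W \<and> W \<subseteq> B \<and> (\<forall>S'. finite S' \<longrightarrow> W \<subseteq> S' \<longrightarrow> \<not> Zn a b c d (rcnt S' (snd x)) (ccnt S' (fst x)))"
      unfolding Z_def by (rule witness)
  qed
  from bchoice[OF this] obtain Wf where Wf0: "\<forall>x\<in>G. finite (Wf x) \<and> Wf x \<subseteq> B \<and> (\<forall>S'. finite S' \<longrightarrow> Wf x \<subseteq> S' \<longrightarrow> \<not> Zn a b c d (rcnt S' (snd x)) (ccnt S' (fst x)))"
    by blast
  have Wfin: "\<And>x. x \<in> G \<Longrightarrow> finite (Wf x)" using Wf0 by blast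
  have WB: "\<And>x. x \<in> G \<Longrightarrow> Wf x \<subseteq> B" using Wf0 by blast
  have WZ: "\<And>x S'. x \<in> G \<Longrightarrow> finite S' \<Longrightarrow> Wf x \<subseteq> S' \<Longrightarrow> \<not> Zn a b c d (rcnt S' (snd x)) (ccnt S' (fst x))"
    using Wf0 by blast
  define F' where "F' = (F \<inter> B) \<union> \<Union>(Wf ` G)"
  have fU: "finite (\<Union>(Wf ` G))" using fG Wfin by (rule finite_UN_I)
  have fF': "finite F'" unfolding F'_def using Suc.prems(1) fU by simp
  have "F' \<subseteq> B" unfolding F'_def using WB by blast
  then have F'B: "F' \<subseteq> (T (Rect (a+b) c \<union> Rect a (c+d)) ^^ t) A" unfolding B_def Z_def .
  obtain p n where pn: "legal a b c d A p n" "F' \<subseteq> A \<union> p ` {..<n}" using Suc.IH[OF fF' F'B] by blast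
  have hyp: "\<forall>x\<in>G. \<forall>S'. finite S' \<longrightarrow> A \<union> p ` {..<n} \<subseteq> S' \<longrightarrow> \<not> Zn a b c d (rcnt S' (snd x)) (ccnt S' (fst x))"
  proof (intro ballI allI impI)
    fix x S' assume x: "x \<in> G" and fS: "finite S'" and sub: "A \<union> p ` {..<n} \<subseteq> S'"
    have "Wf x \<subseteq> F'" unfolding F'_def using x by blast
    then have "Wf x \<subseteq> S'" using pn(2) sub by blast
    then show "\<not> Zn a b c d (rcnt S' (snd x)) (ccnt S' (fst x))" using WZ[OF x fS] by blast
  qed
  from extend[OF pn(1) fG hyp] obtain p' n' where p'n': "legal a b c d A p' n'"
    and cov: "A \<union> p ` {..<n} \<union> G \<subseteq> A \<union> p' ` {..<n'}" by blast
  have FBG: "F \<subseteq> (F \<inter> B) \<union> G" unfolding G_def by blast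
  have FB: "F \<inter> B \<subseteq> A \<union> p ` {..<n}" using pn(2) unfolding F'_def by blast
  have "F \<subseteq> A \<union> p' ` {..<n'}"
  proof
    fix x assume "x \<in> F"
    then have "x \<in> (F \<inter> B) \<union> G" using FBG by blast
    then have "x \<in> A \<union> p ` {..<n} \<union> G" using FB by blast
    then show "x \<in> A \<union> p' ` {..<n'}" using cov by blast
  qed
  then show ?case using p'n' by blast
qed


lemma spans_reach:
  assumes sp: "spans (Rect (a+b) c \<union> Rect a (c+d)) A" and finA: "finite A" and fF: "finite F"
  shows "\<exists>p n. legal a b c d A p n \<and> F \<subseteq> A \<union> p ` {..<n}"
proof -
  define Z where "Z = Rect (a+b) c \<union> Rect a (c+d)"
  have "\<exists>t. F \<subseteq> (T Z ^^ t) A" using fF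
  proof (induction F rule: finite_induct)
    case empty then show ?case by simp
  next
    case (insert x F)
    then obtain t where t: "F \<subseteq> (T Z ^^ t) A" by blast
    have "x \<in> (\<Union>t. (T Z ^^ t) A)" using sp unfolding spans_def Z_def by simp
    then obtain tx where tx: "x \<in> (T Z ^^ tx) A" by blast
    have "F \<subseteq> (T Z ^^ max t tx) A" using t levels_mono[of t "max t tx"] by auto
    moreover have "x \<in> (T Z ^^ max t tx) A" using tx levels_mono[of tx "max t tx"] by auto
    ultimately show ?case by blast
  qed
  then obtain t where "F \<subseteq> (T Z ^^ t) A" by blast
  then show ?thesis using reach_levels[OF finA fF] unfolding Z_def by blast
qed

lemma card_box_col: "finite S \<Longrightarrow> {i} \<times> {..<N} \<subseteq> S \<Longrightarrow> N \<le> ccnt S i"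
proof -
  assume "finite S" "{i} \<times> {..<N} \<subseteq> S"
  then have "{i} \<times> {..<N} \<subseteq> {y\<in>S. fst y = i}" by auto
  then have "card ({i} \<times> {..<N}) \<le> card {y\<in>S. fst y = i}" using \<open>finite S\<close> by (intro card_mono) auto
  then show ?thesis unfolding ccnt_def by (simp add: card_cartesian_product)
qed
lemma card_box_row: "finite S \<Longrightarrow> {..<N} \<times> {j} \<subseteq> S \<Longrightarrow> N \<le> rcnt S j"
proof -
  assume "finite S" "{..<N} \<times> {j} \<subseteq> S"
  then have "{..<N} \<times> {j} \<subseteq> {y\<in>S. snd y = j}" by auto
  then have "card ({..<N} \<times> {j}) \<le> card {y\<in>S. snd y = j}" using \<open>finite S\<close> by (intro card_mono) auto
  then show ?thesis unfolding rcnt_def by (simp add: card_cartesian_product)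
qed

theorem main_from_spans:
  assumes sp: "spans (Rect (a+b) c \<union> Rect a (c+d)) A" and finA: "finite A" and th: "thin A"
    and a1: "1 \<le> a" and c1: "1 \<le> c" and ab2: "2 \<le> a+b" and cd2: "2 \<le> c+d"
  shows "(a-1)*(d+1) + (c-1)*(b+1) \<le> card A"
proof -
  define N where "N = a+b+c+d"
  obtain p n where pn: "legal a b c d A p n" "{..<N} \<times> {..<N} \<subseteq> A \<union> p ` {..<n}"
    using spans_reach[OF sp finA, of "{..<N} \<times> {..<N}"] by blast
  have fS: "finite (A \<union> p ` {..<n})" using finA by simp
  interpret LS a b c d A p n
  proof
    show "finite A" by (rule finA)
    show "thin A" by (rule th)
    show "\<And>k. k < n \<Longrightarrow> p k \<notin> A \<union> p ` {..<k}" using pn(1) unfolding legal_def by blast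
    show "\<And>k. k < n \<Longrightarrow> \<not> Zn a b c d (rcnt (A \<union> p ` {..<k}) (snd (p k))) (ccnt (A \<union> p ` {..<k}) (fst (p k)))"
      using pn(1) unfolding legal_def by blast
    show "1 \<le> a" "1 \<le> c" "2 \<le> a+b" "2 \<le> c+d" by fact+
    show "\<And>i. i < a \<Longrightarrow> c+d \<le> ccnt (A \<union> p ` {..<n}) i"
    proof -
      fix i assume "i < a"
      then have "{i} \<times> {..<N} \<subseteq> {..<N} \<times> {..<N}" unfolding N_def by auto
      then have "{i} \<times> {..<N} \<subseteq> A \<union> p ` {..<n}" using pn(2) by (rule subset_trans)
      then have "N \<le> ccnt (A \<union> p ` {..<n}) i" using card_box_col[OF fS] by blast
      then show "c+d \<le> ccnt (A \<union> p ` {..<n}) i" unfolding N_def by simp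
    qed
    show "\<And>j. j < c \<Longrightarrow> a+b \<le> rcnt (A \<union> p ` {..<n}) j"
    proof -
      fix j assume "j < c"
      then have "{..<N} \<times> {j} \<subseteq> {..<N} \<times> {..<N}" unfolding N_def by auto
      then have "{..<N} \<times> {j} \<subseteq> A \<union> p ` {..<n}" using pn(2) by (rule subset_trans)
      then have "N \<le> rcnt (A \<union> p ` {..<n}) j" using card_box_row[OF fS] by blast
      then show "a+b \<le> rcnt (A \<union> p ` {..<n}) j" unfolding N_def by simp
    qed
  qed
  show ?thesis by (rule LS_bound)
qed


lemma TL_row:
  assumes sp: "spans (Rect (a+b) c \<union> Rect a (c+d)) A" and finA: "finite A"
    and z: "\<And>s. s < m \<Longrightarrow> Zn a b c d 0 s"
  shows "m \<le> card A"
proof (rule ccontr)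
  assume nm: "\<not> m \<le> card A"
  define E where "E = snd ` A"
  have fE: "finite E" unfolding E_def using finA by simp
  have cE: "card E < m" using card_image_le[OF finA, of snd] nm unfolding E_def by linarith
  obtain p n where pn: "legal a b c d A p n" "{0::nat} \<times> {..<m} \<subseteq> A \<union> p ` {..<n}"
    using spans_reach[OF sp finA, of "{0::nat} \<times> {..<m}"] by blast
  have inv: "k \<le> n \<Longrightarrow> snd ` (A \<union> p ` {..<k}) \<subseteq> E" for k
  proof (induction k)
    case 0 then show ?case unfolding E_def by simp
  next
    case (Suc k)
    define Sk where "Sk = A \<union> p ` {..<k}"
    have kn: "k < n" using Suc.prems by simp
    have IH: "snd ` Sk \<subseteq> E" using Suc.IH Suc.prems unfolding Sk_def by simp
    have fSk: "finite Sk" unfolding Sk_def using finA by simp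
    have "snd (p k) \<in> E"
    proof (rule ccontr)
      assume ne: "snd (p k) \<notin> E"
      have E0: "{y\<in>Sk. snd y = snd (p k)} = {}"
      proof (rule ccontr)
        assume "{y\<in>Sk. snd y = snd (p k)} \<noteq> {}"
        then obtain y where "y \<in> Sk" "snd y = snd (p k)" by blast
        then have "snd (p k) \<in> snd ` Sk" by (metis image_eqI)
        then show False using IH ne by blast
      qed
      have r0: "rcnt Sk (snd (p k)) = 0" unfolding rcnt_def E0 by (rule card.empty)
      define Ci where "Ci = {y\<in>Sk. fst y = fst (p k)}"
      have inj: "inj_on snd Ci" unfolding Ci_def by (rule inj_onI) (auto intro: prod_eqI)
      have "ccnt Sk (fst (p k)) = card (snd ` Ci)" unfolding ccnt_def Ci_def[symmetric] using card_image[OF inj] by simp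
      also have "\<dots> \<le> card E" using IH fE unfolding Ci_def by (intro card_mono) auto
      finally have "ccnt Sk (fst (p k)) < m" using cE by simp
      then have "Zn a b c d (rcnt Sk (snd (p k))) (ccnt Sk (fst (p k)))" using z r0 by simp
      moreover have "\<not> Zn a b c d (rcnt (A \<union> p ` {..<k}) (snd (p k))) (ccnt (A \<union> p ` {..<k}) (fst (p k)))"
        using pn(1) kn unfolding legal_def by auto
      ultimately show False unfolding Sk_def by simp
    qed
    moreover have "A \<union> p ` {..<Suc k} = insert (p k) Sk" unfolding Sk_def by (auto simp: lessThan_Suc)
    ultimately show ?case using IH by simp
  qed
  have "{..<m} \<subseteq> snd ` ({0::nat} \<times> {..<m})" by auto
  also have "\<dots> \<subseteq> snd ` (A \<union> p ` {..<n})" using pn(2) by (rule image_mono)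
  also have "\<dots> \<subseteq> E" using inv by simp
  finally have "card {..<m} \<le> card E" using fE by (intro card_mono) auto
  then show False using cE by simp
qed

lemma TL_col:
  assumes sp: "spans (Rect (a+b) c \<union> Rect a (c+d)) A" and finA: "finite A"
    and z: "\<And>r. r < m \<Longrightarrow> Zn a b c d r 0"
  shows "m \<le> card A"
proof (rule ccontr)
  assume nm: "\<not> m \<le> card A"
  define E where "E = fst ` A"
  have fE: "finite E" unfolding E_def using finA by simp
  have cE: "card E < m" using card_image_le[OF finA, of fst] nm unfolding E_def by linarith
  obtain p n where pn: "legal a b c d A p n" "{..<m} \<times> {0::nat} \<subseteq> A \<union> p ` {..<n}"
    using spans_reach[OF sp finA, of "{..<m} \<times> {0::nat}"] by blast
  have inv: "k \<le> n \<Longrightarrow> fst ` (A \<union> p ` {..<k}) \<subseteq> E" for k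
  proof (induction k)
    case 0 then show ?case unfolding E_def by simp
  next
    case (Suc k)
    define Sk where "Sk = A \<union> p ` {..<k}"
    have kn: "k < n" using Suc.prems by simp
    have IH: "fst ` Sk \<subseteq> E" using Suc.IH Suc.prems unfolding Sk_def by simp
    have fSk: "finite Sk" unfolding Sk_def using finA by simp
    have "fst (p k) \<in> E"
    proof (rule ccontr)
      assume ne: "fst (p k) \<notin> E"
      have E0: "{y\<in>Sk. fst y = fst (p k)} = {}"
      proof (rule ccontr)
        assume "{y\<in>Sk. fst y = fst (p k)} \<noteq> {}"
        then obtain y where "y \<in> Sk" "fst y = fst (p k)" by blast
        then have "fst (p k) \<in> fst ` Sk" by (metis image_eqI)
        then show False using IH ne by blast
      qed
      have r0: "ccnt Sk (fst (p k)) = 0" unfolding ccnt_def E0 by (rule card.empty)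
      define Ci where "Ci = {y\<in>Sk. snd y = snd (p k)}"
      have inj: "inj_on fst Ci" unfolding Ci_def by (rule inj_onI) (auto intro: prod_eqI)
      have "rcnt Sk (snd (p k)) = card (fst ` Ci)" unfolding rcnt_def Ci_def[symmetric] using card_image[OF inj] by simp
      also have "\<dots> \<le> card E" using IH fE unfolding Ci_def by (intro card_mono) auto
      finally have "rcnt Sk (snd (p k)) < m" using cE by simp
      then have "Zn a b c d (rcnt Sk (snd (p k))) (ccnt Sk (fst (p k)))" using z r0 by simp
      moreover have "\<not> Zn a b c d (rcnt (A \<union> p ` {..<k}) (snd (p k))) (ccnt (A \<union> p ` {..<k}) (fst (p k)))"
        using pn(1) kn unfolding legal_def by auto
      ultimately show False unfolding Sk_def by simp
    qed
    moreover have "A \<union> p ` {..<Suc k} = insert (p k) Sk" unfolding Sk_def by (auto simp: lessThan_Suc)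
    ultimately show ?case using IH by simp
  qed
  have "{..<m} \<subseteq> fst ` ({..<m} \<times> {0::nat})" by auto
  also have "\<dots> \<subseteq> fst ` (A \<union> p ` {..<n})" using pn(2) by (rule image_mono)
  also have "\<dots> \<subseteq> E" using inv by simp
  finally have "card {..<m} \<le> card E" using fE by (intro card_mono) auto
  then show False using cE by simp
qed


lemma final_ineq:
  assumes finA: "finite A" and th: "thin A" and sp: "spans (Rect (a+b) c \<union> Rect a (c+d)) A"
  shows "b*c + a*d \<le> card A + (b + d)"
proof -
  consider (main) "1 \<le> a" "1 \<le> c" "2 \<le> a+b" "2 \<le> c+d"
    | (ab) "1 \<le> a" "1 \<le> c" "a + b < 2"
    | (cd) "1 \<le> a" "1 \<le> c" "c + d < 2"
    | (a0) "a = 0"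
    | (c0) "1 \<le> a" "c = 0"
    by linarith
  then show ?thesis
  proof cases
    case main
    have "(a-1)*(d+1) + (c-1)*(b+1) \<le> card A" using main_from_spans[OF sp finA th main] .
    moreover obtain a' c' where "a = Suc a'" "c = Suc c'" using main by (metis Suc_le_D One_nat_def)
    ultimately show ?thesis by (simp add: algebra_simps)
  next
    case ab
    have "a = 1" using ab by linarith
    moreover have "b = 0" using ab by linarith
    ultimately show ?thesis by simp
  next
    case cd
    have "c = 1" using cd by linarith
    moreover have "d = 0" using cd by linarith
    ultimately show ?thesis by simp
  next
    case a0
    consider (b0) "b = 0" | (cle) "c \<le> 1" | (b1) "b = 1" "2 \<le> c" | (big) "2 \<le> b" "2 \<le> c" by linarith
    then show ?thesis
    proof cases
      case b0 then show ?thesis using a0 by simp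
    next
      case cle
      then have "b*c \<le> b*1" by (intro mult_le_mono2)
      then have "b*c \<le> b" by simp
      moreover have "a*d = 0" using a0 by simp
      ultimately show ?thesis by linarith
    next
      case b1
      have "c \<le> card A"
        by (rule TL_row[OF sp finA]) (use a0 b1 in \<open>simp add: Zn_def\<close>)
      then show ?thesis using a0 b1 by simp
    next
      case big
      have eq: "Rect (a+b) c \<union> Rect a (c+d) = Rect (1 + (b-1)) c \<union> Rect 1 (c + 0)"
        using a0 big unfolding Rect_def by auto
      have sp': "spans (Rect (1 + (b-1)) c \<union> Rect 1 (c + 0)) A" using sp eq by simp
      have "(1-1)*(0+1) + (c-1)*((b-1)+1) \<le> card A"
        by (rule main_from_spans[OF sp' finA th]) (use big in auto)
      then have "(c-1)*b \<le> card A" using big by simp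
      moreover obtain c' where "c = Suc c'" using big by (metis Suc_le_D numeral_2_eq_2 Suc_le_lessD)
      ultimately show ?thesis using a0 by (simp add: algebra_simps)
    qed
  next
    case c0
    consider (d0) "d = 0" | (ale) "a \<le> 1" | (d1) "d = 1" "2 \<le> a" | (big) "2 \<le> d" "2 \<le> a" by linarith
    then show ?thesis
    proof cases
      case d0 then show ?thesis using c0 by simp
    next
      case ale
      then have "a*d \<le> 1*d" by (intro mult_le_mono1)
      then have "a*d \<le> d" by simp
      moreover have "b*c = 0" using c0 by simp
      ultimately show ?thesis by linarith
    next
      case d1
      have "a \<le> card A"
        by (rule TL_col[OF sp finA]) (use c0 d1 in \<open>simp add: Zn_def\<close>)
      then show ?thesis using c0 d1 by simp
    next
      case big
      have eq: "Rect (a+b) c \<union> Rect a (c+d) = Rect (a + 0) 1 \<union> Rect a (1 + (d-1))"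
        using c0 big unfolding Rect_def by auto
      have sp': "spans (Rect (a + 0) 1 \<union> Rect a (1 + (d-1))) A" using sp eq by simp
      have "(a-1)*((d-1)+1) + (1-1)*(0+1) \<le> card A"
        by (rule main_from_spans[OF sp' finA th]) (use big in auto)
      then have "(a-1)*d \<le> card A" using big by simp
      moreover obtain a' where "a = Suc a'" using big by (metis Suc_le_D numeral_2_eq_2 Suc_le_lessD)
      ultimately show ?thesis using c0 by (simp add: algebra_simps)
    qed
  qed
qed

theorem mainTheorem18:
  fixes a b c d :: nat
  shows "enat (b * c + a * d) \<le> gamma_thin (Rect (a + b) c \<union> Rect a (c + d)) + enat (b + d)"
proof -
  define m where "m = b * c + a * d - (b + d)"
  have "enat m \<le> gamma_thin (Rect (a + b) c \<union> Rect a (c + d))"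
    unfolding gamma_thin_def
  proof (rule INF_greatest)
    fix A assume "A \<in> {A. finite A \<and> thin A \<and> spans (Rect (a + b) c \<union> Rect a (c + d)) A}"
    then have "b*c + a*d \<le> card A + (b + d)" using final_ineq by blast
    then show "enat m \<le> enat (card A)" unfolding m_def by simp
  qed
  then have "enat m + enat (b + d) \<le> gamma_thin (Rect (a + b) c \<union> Rect a (c + d)) + enat (b + d)"
    by (rule add_right_mono)
  moreover have "enat (b * c + a * d) \<le> enat m + enat (b + d)" unfolding m_def by simp
  ultimately show ?thesis by (meson order_trans)
qed


end
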